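(* Let $n\ge1$, $q\in\mathbb{C}$ with $0<|q|<1$, and $0<r<\frac{1-|q|}{|1-q|}$. Then $$\sum_{\sigma\in\mathbb{S}_n}\Big(\frac{1}{2\pi i}\Big)^n\oint_{\mathcal{C}_r}\cdots\oint_{\mathcal{C}_r}A_\sigma\prod_{i=1}^n z_i^{-1}\,dz_1\cdots dz_n=[n]_q!.$$
   Context: $\mathcal{C}_r$ is the positively oriented circle of radius $r$ centered at $0$. $[k]_q=1+q+\cdots+q^{k-1}$, $[n]_q!=[1]_q[2]_q\cdots[n]_q$. For $1\le\alpha<\beta\le n$ put $S_{\beta\alpha}=S_{\beta\alpha}(z_\alpha,z_\beta)=-\dfrac{z_\beta-qz_\alpha-(1-q)z_\alpha z_\beta}{z_\alpha-qz_\beta-(1-q)z_\alpha z_\beta}$. An inversion of $\sigma\in\mathbb{S}_n$ is a pair $(\alpha,\beta)$ with $1\le\alpha<\beta\le n$ and $\sigma^{-1}(\beta)<\sigma^{-1}(\alpha)$ (i.e. $\beta$ appears before $\alpha$ in the word $\sigma(1)\sigma(2)\cdots\sigma(n)$). $A_\sigma=\prod_{(\alpha,\beta)\text{ inversion of }\sigma}S_{\beta\alpha}$ (so $A_{\mathrm{Id}}=1$). *)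

theory Defs
  imports "HOL-Analysis.Analysis" "HOL-Combinatorics.Permutations"
begin

text \<open>(1/(2 pi i)) is not included here: circle_integral r f is the contour integral
  of f over the positively oriented circle of radius r centred at 0, parametrised by
  t \<mapsto> r e^{it}, t in [0, 2 pi]: integral of f(gamma t) * gamma'(t).\<close>
definition circle_integral :: "real \<Rightarrow> (complex \<Rightarrow> complex) \<Rightarrow> complex" where
  "circle_integral r f =
     integral {0..2*pi} (\<lambda>t. f (of_real r * exp (\<i> * of_real t)) * (\<i> * of_real r * exp (\<i> * of_real t)))"

text \<open>Iterated n-fold circle integral of F in the variables z 1, ..., z n
  (innermost integral in z 1, outermost in z n).\<close>
fun multi_circle_integral :: "real \<Rightarrow> nat \<Rightarrow> ((nat \<Rightarrow> complex) \<Rightarrow> complex) \<Rightarrow> complex" where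
  "multi_circle_integral r 0 F = F (\<lambda>_. 0)"
| "multi_circle_integral r (Suc n) F =
     circle_integral r (\<lambda>w. multi_circle_integral r n (\<lambda>z. F (z(Suc n := w))))"

definition S_fac :: "complex \<Rightarrow> complex \<Rightarrow> complex \<Rightarrow> complex" where
  "S_fac q za zb = - (zb - q * za - (1 - q) * za * zb) / (za - q * zb - (1 - q) * za * zb)"

definition inversions :: "nat \<Rightarrow> (nat \<Rightarrow> nat) \<Rightarrow> (nat \<times> nat) set" where
  "inversions n \<sigma> = {(a, b). 1 \<le> a \<and> a < b \<and> b \<le> n \<and> inv \<sigma> b < inv \<sigma> a}"

definition A_sigma :: "complex \<Rightarrow> nat \<Rightarrow> (nat \<Rightarrow> nat) \<Rightarrow> (nat \<Rightarrow> complex) \<Rightarrow> complex" where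
  "A_sigma q n \<sigma> z = (\<Prod>(a, b)\<in>inversions n \<sigma>. S_fac q (z a) (z b))"

definition qint :: "complex \<Rightarrow> nat \<Rightarrow> complex" where
  "qint q k = (\<Sum>j<k. q ^ j)"

definition qfact :: "complex \<Rightarrow> nat \<Rightarrow> complex" where
  "qfact q n = (\<Prod>k=1..n. qint q k)"

end

theory Submission
  imports Defs
begin



lemma integral_exp_it: "integral {0..2*pi} (\<lambda>t. exp (\<i> * of_real t)) = (0::complex)"
proof -
  have "((\<lambda>t. exp (\<i> * of_real t)) has_integral
      (- \<i> * exp (\<i> * of_real (2*pi))) - (- \<i> * exp (\<i> * of_real 0))) {0..2*pi}"
  proof (rule fundamental_theorem_of_calculus)
    fix t :: real
    have "((\<lambda>u. - \<i> * exp (\<i> * u)) has_field_derivative exp (\<i> * of_real t)) (at (of_real t))"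
      by (auto intro!: derivative_eq_intros simp: mult.assoc)
    then show "((\<lambda>t. - \<i> * exp (\<i> * of_real t)) has_vector_derivative exp (\<i> * of_real t)) (at t within {0..2*pi})"
      by (rule has_vector_derivative_real_field)
  qed simp
  moreover have "exp (\<i> * of_real (2*pi)) = 1"
    using exp_two_pi_i' by (simp add: mult.commute)
  ultimately show ?thesis by (simp add: integral_unique)
qed

lemma mvp:
  fixes g g' :: "complex \<Rightarrow> complex" and r :: real
  assumes r: "r > 0" and U: "cball 0 r \<subseteq> U"
    and d: "\<And>w. w \<in> U \<Longrightarrow> (g has_field_derivative g' w) (at w)"
    and c: "continuous_on U g'"
  shows "integral {0..2*pi} (\<lambda>t. g (of_real r * exp (\<i> * of_real t))) = 2 * pi * g 0"
proof -
  define S where "S = closed_segment 0 (complex_of_real r)"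
  have inU: "x * exp (\<i> * of_real t) \<in> U" if "x \<in> S" for x t
  proof -
    have "norm (x - 0) \<le> norm (complex_of_real r - 0)" using that unfolding S_def
      by (rule segment_bound1)
    then have "norm x \<le> r" using r by simp
    then have "norm (x * exp (\<i> * of_real t)) \<le> r" by (simp add: norm_mult)
    then show ?thesis using U by auto
  qed
  have gc: "continuous_on U g"
    using d by (meson DERIV_isCont continuous_at_imp_continuous_on)
  have chain: "((\<lambda>x. g (f x)) has_field_derivative g' (f x) * D) (at x within A)"
    if "(f has_field_derivative D) (at x within A)" "f x \<in> U" for f D x A
    using DERIV_chain'[OF that(1) d[OF that(2)]] .
  define \<phi> where "\<phi> x = integral (cbox 0 (2*pi)) (\<lambda>t. g (x * exp (\<i> * of_real t)))" for x
  have der: "(\<phi> has_field_derivative integral (cbox 0 (2*pi)) (\<lambda>t. g' (x * exp (\<i> * of_real t)) * exp (\<i> * of_real t))) (at x within S)"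
    if x: "x \<in> S" for x
    unfolding \<phi>_def
  proof (rule leibniz_rule_field_derivative)
    fix x t assume "x \<in> S" "t \<in> cbox 0 (2*pi::real)"
    show "((\<lambda>x. g (x * exp (\<i> * of_real t))) has_field_derivative
            g' (x * exp (\<i> * of_real t)) * exp (\<i> * of_real t)) (at x within S)"
      by (rule chain) (auto intro!: derivative_eq_intros inU[OF \<open>x \<in> S\<close>])
  next
    fix x assume "x \<in> S"
    show "(\<lambda>t. g (x * exp (\<i> * of_real t))) integrable_on cbox 0 (2*pi)"
      by (rule integrable_continuous, rule continuous_on_compose2[OF gc])
         (auto intro!: continuous_intros inU[OF \<open>x \<in> S\<close>])
  next
    show "continuous_on (S \<times> cbox 0 (2*pi)) (\<lambda>(x, t). g' (x * exp (\<i> * of_real t)) * exp (\<i> * of_real t))"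
    proof -
      have "continuous_on (S \<times> cbox 0 (2*pi)) (\<lambda>p. g' (fst p * exp (\<i> * of_real (snd p))))"
        by (rule continuous_on_compose2[OF c]) (auto intro!: continuous_intros inU)
      then have "continuous_on (S \<times> cbox 0 (2*pi)) (\<lambda>p. g' (fst p * exp (\<i> * of_real (snd p))) * exp (\<i> * of_real (snd p)))"
        by (auto intro!: continuous_intros)
      then show ?thesis by (simp add: case_prod_unfold)
    qed
  qed (use x in \<open>auto simp: S_def\<close>)
  have zero: "integral (cbox 0 (2*pi)) (\<lambda>t. g' (x * exp (\<i> * of_real t)) * exp (\<i> * of_real t)) = 0"
    if x: "x \<in> S" for x
  proof (cases "x = 0")
    case True
    then show ?thesis using integral_exp_it by (simp add: integral_mult_right)
  next
    case False
    have "((\<lambda>t. \<i> * x * (g' (x * exp (\<i> * of_real t)) * exp (\<i> * of_real t))) has_integral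
        g (x * exp (\<i> * of_real (2*pi))) - g (x * exp (\<i> * of_real 0))) {0..2*pi}"
    proof (rule fundamental_theorem_of_calculus)
      fix t :: real
      have "((\<lambda>u. g (x * exp (\<i> * u))) has_field_derivative
          g' (x * exp (\<i> * of_real t)) * (x * (exp (\<i> * of_real t) * \<i>))) (at (of_real t))"
        by (rule chain) (auto intro!: derivative_eq_intros inU[OF x] simp: ac_simps)
      then have "((\<lambda>t. g (x * exp (\<i> * of_real t))) has_vector_derivative
          g' (x * exp (\<i> * of_real t)) * (x * (exp (\<i> * of_real t) * \<i>))) (at t within {0..2*pi})"
        by (rule has_vector_derivative_real_field)
      then show "((\<lambda>t. g (x * exp (\<i> * of_real t))) has_vector_derivative
          \<i> * x * (g' (x * exp (\<i> * of_real t)) * exp (\<i> * of_real t))) (at t within {0..2*pi})"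
        by (simp add: ac_simps)
    qed simp
    moreover have "exp (\<i> * of_real (2*pi)) = 1"
      using exp_two_pi_i' by (simp add: mult.commute)
    ultimately have h: "((\<lambda>t. \<i> * x * (g' (x * exp (\<i> * of_real t)) * exp (\<i> * of_real t))) has_integral 0) {0..2*pi}"
      by simp
    from integral_unique[OF h] False show ?thesis by simp
  qed
  have "\<exists>c. \<forall>x\<in>S. \<phi> x = c"
    by (rule has_field_derivative_zero_constant) (use der zero in \<open>auto simp: S_def\<close>)
  then obtain c where "\<forall>x\<in>S. \<phi> x = c" by blast
  then have "\<phi> (of_real r) = \<phi> 0" by (auto simp: S_def)
  then show ?thesis by (simp add: \<phi>_def scaleR_conv_of_real)
qed



definition torus :: "real \<Rightarrow> nat \<Rightarrow> (nat \<Rightarrow> complex) set" where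
  "torus r m = {z. \<forall>i. (i \<in> {1..m} \<longrightarrow> cmod (z i) = r) \<and> (i \<notin> {1..m} \<longrightarrow> z i = 0)}"

definition mrg :: "nat \<Rightarrow> (nat \<Rightarrow> complex) \<Rightarrow> (nat \<Rightarrow> complex) \<Rightarrow> (nat \<Rightarrow> complex)" where
  "mrg m z y = (\<lambda>i. if i \<in> {1..m} then z i else y i)"

lemma torus_0: "torus r 0 = {\<lambda>_. 0}"
  by (auto simp: torus_def fun_eq_iff)

lemma torus_upd:
  assumes "z \<in> torus r m" "cmod w = r" shows "z(Suc m := w) \<in> torus r (Suc m)"
proof -
  have h: "(i \<in> {1..m} \<longrightarrow> cmod (z i) = r) \<and> (i \<notin> {1..m} \<longrightarrow> z i = 0)" for i
    using assms(1) by (simp add: torus_def)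
  show ?thesis unfolding torus_def
  proof (intro CollectI allI conjI impI)
    fix i assume "i \<in> {1..Suc m}" then show "cmod ((z(Suc m := w)) i) = r"
      using h[of i] assms(2) by (cases "i = Suc m") auto
  next
    fix i assume "i \<notin> {1..Suc m}" then show "(z(Suc m := w)) i = 0"
      using h[of i] by auto
  qed
qed

lemma mrg_0: "mrg 0 z y = y"
  by (simp add: mrg_def fun_eq_iff)

lemma mrg_Suc: "mrg (Suc m) (z(Suc m := w)) y = mrg m z (y(Suc m := w))"
  by (simp add: mrg_def fun_eq_iff)

lemma upd_cont:
  fixes f :: "'a::topological_space \<Rightarrow> nat \<Rightarrow> complex"
  assumes "continuous_on S f" "continuous_on S g"
  shows "continuous_on S (\<lambda>x. (f x)(k := g x))"
proof (rule continuous_on_coordinatewise_then_product)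
  fix i show "continuous_on S (\<lambda>x. ((f x)(k := g x)) i)"
    using assms continuous_on_product_then_coordinatewise[OF assms(1), of i]
    by (cases "i = k") auto
qed

lemma norm_gamma: "r > 0 \<Longrightarrow> cmod (of_real r * exp (\<i> * of_real t)) = r"
  by (simp add: norm_mult)

lemma circle_integral_cong:
  assumes "r > 0" "\<And>w. cmod w = r \<Longrightarrow> f w = g w"
  shows "circle_integral r f = circle_integral r g"
  unfolding circle_integral_def using assms norm_gamma[OF assms(1)]
  by (intro integral_cong) auto

lemma circle_integral_cmult:
  "circle_integral r (\<lambda>w. c * f w) = c * circle_integral r f"
  unfolding circle_integral_def by (simp add: mult.assoc integral_mult_right)

lemma MCI_cmult:
  "multi_circle_integral r m (\<lambda>z. c * F z) = c * multi_circle_integral r m F"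
  by (induction m arbitrary: F) (simp_all add: circle_integral_cmult)

lemma MCI_cong:
  assumes "r > 0" "\<And>z. z \<in> torus r m \<Longrightarrow> F z = G z"
  shows "multi_circle_integral r m F = multi_circle_integral r m G"
  using assms(2)
proof (induction m arbitrary: F G)
  case 0
  then show ?case by (simp add: torus_0)
next
  case (Suc m)
  have "circle_integral r (\<lambda>w. multi_circle_integral r m (\<lambda>z. F (z(Suc m := w)))) =
        circle_integral r (\<lambda>w. multi_circle_integral r m (\<lambda>z. G (z(Suc m := w))))"
  proof (rule circle_integral_cong[OF assms(1)])
    fix w :: complex assume w: "cmod w = r"
    show "multi_circle_integral r m (\<lambda>z. F (z(Suc m := w))) = multi_circle_integral r m (\<lambda>z. G (z(Suc m := w)))"
      by (rule Suc.IH) (rule Suc.prems, rule torus_upd[OF _ w])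
  qed
  then show ?case by simp
qed

lemma MCI_cont:
  fixes F :: "'p::topological_space \<times> (nat \<Rightarrow> complex) \<Rightarrow> complex"
  assumes r: "r > 0"
  assumes "continuous_on {(p, mrg m z y) | p y z. (p, y) \<in> W \<and> z \<in> torus r m} F"
  shows "continuous_on W (\<lambda>(p, y). multi_circle_integral r m (\<lambda>z. F (p, mrg m z y)))"
  using assms(2)
proof (induction m arbitrary: W)
  case 0
  have "continuous_on W F"
    by (rule continuous_on_subset[OF 0]) (force simp: torus_0 mrg_0)
  then show ?case by (simp add: mrg_0 case_prod_unfold)
next
  case (Suc m)
  define g where "g s = complex_of_real r * exp (\<i> * complex_of_real s)" for s :: real
  define W' where "W' = {(p, y(Suc m := g s)) | p y s. (p, y) \<in> W \<and> s \<in> {0..2*pi}}"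
  have "continuous_on W' (\<lambda>(p, y). multi_circle_integral r m (\<lambda>z. F (p, mrg m z y)))"
  proof (rule Suc.IH, rule continuous_on_subset[OF Suc.prems])
    show "{(p, mrg m z y) |p y z. (p, y) \<in> W' \<and> z \<in> torus r m}
      \<subseteq> {(p, mrg (Suc m) z y) |p y z. (p, y) \<in> W \<and> z \<in> torus r (Suc m)}"
    proof
      fix x assume "x \<in> {(p, mrg m z y) |p y z. (p, y) \<in> W' \<and> z \<in> torus r m}"
      then obtain p y s z where "x = (p, mrg m z (y(Suc m := g s)))" "(p, y) \<in> W" "z \<in> torus r m"
        by (auto simp: W'_def)
      then have "x = (p, mrg (Suc m) (z(Suc m := g s)) y)" "z(Suc m := g s) \<in> torus r (Suc m)" "(p, y) \<in> W"
        using torus_upd[of z r m "g s"] norm_gamma[OF r] mrg_Suc[of m z "g s" y]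
        by (auto simp: g_def)
      then show "x \<in> {(p, mrg (Suc m) z y) |p y z. (p, y) \<in> W \<and> z \<in> torus r (Suc m)}"
        by blast
    qed
  qed
  then have c1: "continuous_on (W \<times> cbox 0 (2*pi))
      (\<lambda>x. multi_circle_integral r m (\<lambda>z. F (fst (fst x), mrg m z ((snd (fst x))(Suc m := g (snd x))))))"
    (is "continuous_on _ ?h")
  proof -
    assume c: "continuous_on W' (\<lambda>(p, y). multi_circle_integral r m (\<lambda>z. F (p, mrg m z y)))"
    have "continuous_on (W \<times> cbox 0 (2*pi))
      ((\<lambda>(p, y). multi_circle_integral r m (\<lambda>z. F (p, mrg m z y))) \<circ>
        (\<lambda>x. (fst (fst x), (snd (fst x))(Suc m := g (snd x)))))"
    proof (rule continuous_on_compose[OF _ continuous_on_subset[OF c]])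
      show "continuous_on (W \<times> cbox 0 (2 * pi)) (\<lambda>x. (fst (fst x), (snd (fst x))(Suc m := g (snd x))))"
        unfolding g_def by (intro continuous_intros upd_cont)
      show "(\<lambda>x. (fst (fst x), (snd (fst x))(Suc m := g (snd x)))) ` (W \<times> cbox 0 (2 * pi)) \<subseteq> W'"
        by (force simp: W'_def)
    qed
    then show ?thesis by (simp add: o_def)
  qed
  have c2: "continuous_on (W \<times> cbox 0 (2*pi))
      (\<lambda>(x, s). ?h (x, s) * (\<i> * of_real r * exp (\<i> * of_real s)))"
    using c1 by (auto simp: case_prod_unfold intro!: continuous_intros)
  have "continuous_on W (\<lambda>x. integral (cbox 0 (2*pi)) (\<lambda>s. ?h (x, s) * (\<i> * of_real r * exp (\<i> * of_real s))))"
    by (rule integral_continuous_on_param[OF c2])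
  moreover have "multi_circle_integral r (Suc m) (\<lambda>z. F (p, mrg (Suc m) z y)) =
      integral (cbox 0 (2*pi)) (\<lambda>s. ?h ((p, y), s) * (\<i> * of_real r * exp (\<i> * of_real s)))" for p y
    by (simp add: circle_integral_def mrg_Suc g_def)
  ultimately show ?case by (simp add: case_prod_unfold)
qed

lemma mrg_zero_upd: "z \<in> torus r m \<Longrightarrow> mrg m z ((\<lambda>_. 0)(Suc m := w)) = z(Suc m := w)"
  by (auto simp: mrg_def torus_def fun_eq_iff)

lemma MCI_swap:
  assumes r: "r > 0"
    and c: "continuous_on ({0..2*pi} \<times> torus r m) (\<lambda>(t, z). G t z)"
  shows "integral {0..2*pi} (\<lambda>t. multi_circle_integral r m (G t)) =
         multi_circle_integral r m (\<lambda>z. integral {0..2*pi} (\<lambda>t. G t z))"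
  using c
proof (induction m arbitrary: G)
  case 0
  then show ?case by simp
next
  case (Suc m)
  define g where "g s = complex_of_real r * exp (\<i> * complex_of_real s)" for s :: real
  define g' where "g' s = \<i> * complex_of_real r * exp (\<i> * complex_of_real s)" for s :: real
  have gn: "cmod (g s) = r" for s unfolding g_def by (rule norm_gamma[OF r])
  have cs: "continuous_on ({0..2*pi} \<times> torus r m) (\<lambda>(t, z). G t (z(Suc m := g s)))" for s
  proof -
    have "continuous_on ({0..2*pi} \<times> torus r m) ((\<lambda>(t, z). G t z) \<circ> (\<lambda>x. (fst x, (snd x)(Suc m := g s))))"
    proof (rule continuous_on_compose[OF _ continuous_on_subset[OF Suc.prems]])
      show "continuous_on ({0..2 * pi} \<times> torus r m) (\<lambda>x. (fst x, (snd x)(Suc m := g s)))"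
        by (intro continuous_intros upd_cont)
      show "(\<lambda>x. (fst x, (snd x)(Suc m := g s))) ` ({0..2 * pi} \<times> torus r m) \<subseteq> {0..2 * pi} \<times> torus r (Suc m)"
        using torus_upd gn by force
    qed
    then show ?thesis by (simp add: o_def case_prod_unfold)
  qed
  have IH: "integral {0..2*pi} (\<lambda>t. multi_circle_integral r m (\<lambda>z. G t (z(Suc m := g s)))) =
      multi_circle_integral r m (\<lambda>z. integral {0..2*pi} (\<lambda>t. G t (z(Suc m := g s))))" for s
    using Suc.IH[OF cs[of s]] .
  define W where "W = {(t, (\<lambda>_. 0)(Suc m := g s)) | t s. t \<in> {0..2*pi} \<and> s \<in> {0..2*pi}}"
  have cW: "continuous_on W (\<lambda>(p, y). multi_circle_integral r m (\<lambda>z. (\<lambda>(t, x). G t x) (p, mrg m z y)))"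
  proof (rule MCI_cont[OF r], rule continuous_on_subset[OF Suc.prems])
    show "{(p, mrg m z y) |p y z. (p, y) \<in> W \<and> z \<in> torus r m} \<subseteq> {0..2 * pi} \<times> torus r (Suc m)"
      using torus_upd gn mrg_zero_upd by (force simp: W_def)
  qed
  have H: "continuous_on (cbox (0, 0) (2*pi, 2*pi))
      (\<lambda>(s, t). multi_circle_integral r m (\<lambda>z. G t (z(Suc m := g s))) * g' s)"
  proof -
    have "continuous_on (cbox (0, 0) (2*pi, 2*pi))
      ((\<lambda>(p, y). multi_circle_integral r m (\<lambda>z. (\<lambda>(t, x). G t x) (p, mrg m z y))) \<circ> (\<lambda>x. (snd x, (\<lambda>_. 0)(Suc m := g (fst x)))))"
    proof (rule continuous_on_compose[OF _ continuous_on_subset[OF cW]])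
      show "continuous_on (cbox (0, 0) (2 * pi, 2 * pi)) (\<lambda>x. (snd x, (\<lambda>_. 0)(Suc m := g (fst x))))"
        unfolding g_def by (intro continuous_intros upd_cont)
      show "(\<lambda>x. (snd x, (\<lambda>_. 0)(Suc m := g (fst x)))) ` cbox (0, 0) (2 * pi, 2 * pi) \<subseteq> W"
        by (force simp: W_def cbox_Pair_eq)
    qed
    then have "continuous_on (cbox (0, 0) (2*pi, 2*pi))
      (\<lambda>x. multi_circle_integral r m (\<lambda>z. G (snd x) (mrg m z ((\<lambda>_. 0)(Suc m := g (fst x))))) * g' (fst x))"
      unfolding g'_def by (auto simp: o_def intro!: continuous_intros)
    moreover have "multi_circle_integral r m (\<lambda>z. G t (mrg m z ((\<lambda>_. 0)(Suc m := g s)))) =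
        multi_circle_integral r m (\<lambda>z. G t (z(Suc m := g s)))" for s t
      by (rule MCI_cong[OF r]) (simp add: mrg_zero_upd)
    ultimately show ?thesis by (simp add: case_prod_unfold)
  qed
  have "multi_circle_integral r (Suc m) (\<lambda>z. integral {0..2*pi} (\<lambda>t. G t z)) =
      integral {0..2*pi} (\<lambda>s. integral {0..2*pi} (\<lambda>t. multi_circle_integral r m (\<lambda>z. G t (z(Suc m := g s)))) * g' s)"
    by (simp only: multi_circle_integral.simps circle_integral_def g_def g'_def IH[unfolded g_def])
  also have "\<dots> = integral {0..2*pi} (\<lambda>s. integral {0..2*pi} (\<lambda>t. multi_circle_integral r m (\<lambda>z. G t (z(Suc m := g s))) * g' s))"
    by (simp add: integral_mult_left)
  also have "\<dots> = integral {0..2*pi} (\<lambda>t. integral {0..2*pi} (\<lambda>s. multi_circle_integral r m (\<lambda>z. G t (z(Suc m := g s))) * g' s))"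
    using integral_swap_continuous[OF H] by (simp add: cbox_interval)
  also have "\<dots> = integral {0..2*pi} (\<lambda>t. multi_circle_integral r (Suc m) (G t))"
    by (simp add: circle_integral_def g_def g'_def)
  finally show ?case ..
qed



definition dS :: "complex \<Rightarrow> complex \<Rightarrow> complex \<Rightarrow> complex" where
  "dS q c w = - ((1 - (1-q)*c) * (c - q*w - (1-q)*c*w) - (w - q*c - (1-q)*c*w) * (- q - (1-q)*c))
      / (c - q*w - (1-q)*c*w)^2"

lemma S_fac_deriv:
  assumes "c - q*w - (1-q)*c*w \<noteq> 0"
  shows "((\<lambda>w. S_fac q c w) has_field_derivative dS q c w) (at w)"
  unfolding S_fac_def dS_def
  using assms by (auto intro!: derivative_eq_intros simp: power2_eq_square field_simps)

lemma denom_nz: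
  fixes q x y :: complex and r :: real
  assumes "cmod x = r" "cmod y < r / (cmod q + cmod (1-q) * r)" "r > 0" "cmod q > 0"
  shows "x - q*y - (1-q)*x*y \<noteq> 0"
proof
  assume h: "x - q*y - (1-q)*x*y = 0"
  have k: "cmod q + cmod (1-q) * r > 0" using assms by (simp add: add_pos_nonneg)
  have "x = y * (q + (1-q)*x)" using h by (simp add: algebra_simps)
  then have "r = cmod y * cmod (q + (1-q)*x)" using assms(1) by (metis norm_mult)
  also have "\<dots> \<le> cmod y * (cmod q + cmod (1-q) * r)"
    by (rule mult_left_mono) (use assms(1) in \<open>auto intro: order.trans[OF norm_triangle_ineq] simp: norm_mult\<close>)
  also have "\<dots> < r"
    using assms(2) k by (simp add: pos_less_divide_eq)
  finally show False by simp
qed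


definition invs :: "nat \<Rightarrow> (nat \<Rightarrow> nat) \<Rightarrow> (nat \<times> nat) set" where
  "invs n \<tau> = {(a, b). 1 \<le> a \<and> a < b \<and> b \<le> n \<and> \<tau> b < \<tau> a}"

definition Bf :: "complex \<Rightarrow> nat \<Rightarrow> (nat \<Rightarrow> nat) \<Rightarrow> (nat \<Rightarrow> complex) \<Rightarrow> complex" where
  "Bf q n \<tau> z = (\<Prod>(a, b)\<in>invs n \<tau>. S_fac q (z a) (z b))"

lemma invs_subset: "invs n \<tau> \<subseteq> {1..n} \<times> {1..n}"
  by (auto simp: invs_def)

lemma finite_invs [simp]: "finite (invs n \<tau>)"
  by (rule finite_subset[OF invs_subset]) auto

lemma invs_Suc: "invs (Suc m) \<tau> = invs m \<tau> \<union> (\<lambda>a. (a, Suc m)) ` {a \<in> {1..m}. \<tau> (Suc m) < \<tau> a}"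
  by (auto simp: invs_def image_iff le_Suc_eq)

lemma invs_Suc_disj: "invs m \<tau> \<inter> (\<lambda>a. (a, Suc m)) ` {a \<in> {1..m}. \<tau> (Suc m) < \<tau> a} = {}"
  by (auto simp: invs_def)

lemma coord_cont [continuous_intros]: "continuous_on S (\<lambda>z::nat \<Rightarrow> complex. z a)"
  by (rule continuous_on_subset[OF continuous_on_product_coordinates]) simp

lemma torus_norm: "z \<in> torus r m \<Longrightarrow> a \<in> {1..m} \<Longrightarrow> cmod (z a) = r"
  by (simp add: torus_def)

lemma card_invs_Suc:
  "card (invs (Suc m) \<tau>) = card (invs m \<tau>) + card {a \<in> {1..m}. \<tau> (Suc m) < \<tau> a}"
proof -
  have "card (invs (Suc m) \<tau>) = card (invs m \<tau>) + card ((\<lambda>a. (a, Suc m)) ` {a \<in> {1..m}. \<tau> (Suc m) < \<tau> a})"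
    unfolding invs_Suc by (rule card_Un_disjoint) (use invs_Suc_disj in auto)
  also have "card ((\<lambda>a. (a, Suc m)) ` {a \<in> {1..m}. \<tau> (Suc m) < \<tau> a}) = card {a \<in> {1..m}. \<tau> (Suc m) < \<tau> a}"
    by (rule card_image) (auto simp: inj_on_def)
  finally show ?thesis .
qed

context
  fixes q :: complex and r :: real
  assumes q0: "0 < cmod q" and q1: "cmod q < 1" and r0: "0 < r"
    and rb: "r < (1 - cmod q) / cmod (1 - q)"
begin

definition "\<rho> = r / (cmod q + cmod (1-q) * r)"

lemma k_pos: "0 < cmod q + cmod (1-q) * r"
  using q0 r0 by (simp add: add_pos_nonneg)

lemma k_lt1: "cmod q + cmod (1-q) * r < 1"
proof -
  have "q \<noteq> 1" using q1 by auto
  then have "cmod (1 - q) > 0" by simp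
  then have "r * cmod (1 - q) < 1 - cmod q" using rb by (simp add: pos_less_divide_eq)
  then show ?thesis by (simp add: algebra_simps)
qed

lemma r_lt_rho: "r < \<rho>"
  unfolding \<rho>_def using k_pos k_lt1 r0 by (simp add: pos_less_divide_eq)

lemma den_ball: "cmod x = r \<Longrightarrow> cmod y < \<rho> \<Longrightarrow> x - q*y - (1-q)*x*y \<noteq> 0"
  by (rule denom_nz) (use q0 r0 in \<open>auto simp: \<rho>_def\<close>)

lemma den_torus: "cmod x = r \<Longrightarrow> cmod y = r \<Longrightarrow> x - q*y - (1-q)*x*y \<noteq> 0"
  using den_ball r_lt_rho by simp

lemma cont_S:
  assumes "a \<in> {1..N}" "b \<in> {1..N}"
  shows "continuous_on (torus r N) (\<lambda>z. S_fac q (z a) (z b))"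
proof -
  have h: "\<forall>z\<in>torus r N. z a - q * z b - (1-q) * z a * z b \<noteq> 0"
    by (intro ballI den_torus torus_norm) (use assms in auto)
  show ?thesis unfolding S_fac_def
    by (intro continuous_intros) (use h in blast)
qed

lemma cont_F: "continuous_on (torus r n) (\<lambda>z. Bf q n \<tau> z * (\<Prod>i=1..n. inverse (z i)))"
proof -
  have 1: "continuous_on (torus r n) (\<lambda>z. \<Prod>p\<in>invs n \<tau>. (case p of (a, b) \<Rightarrow> S_fac q (z a) (z b)))"
  proof (rule continuous_on_prod)
    fix p assume "p \<in> invs n \<tau>"
    then obtain a b where "p = (a, b)" "a \<in> {1..n}" "b \<in> {1..n}" using invs_subset by blast
    then show "continuous_on (torus r n) (\<lambda>z. case p of (a, b) \<Rightarrow> S_fac q (z a) (z b))"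
      using cont_S by simp
  qed
  have 2: "continuous_on (torus r n) (\<lambda>z. \<Prod>i=1..n. inverse (z i))"
  proof (rule continuous_on_prod, rule continuous_on_inverse)
    fix i assume "i \<in> {1..n}"
    then show "\<forall>z\<in>torus r n. z i \<noteq> 0" using torus_norm r0 by fastforce
  qed (rule coord_cont)
  show ?thesis unfolding Bf_def by (rule continuous_on_mult[OF 1 2])
qed

lemma cont_S_ball: "cmod c = r \<Longrightarrow> continuous_on (ball 0 \<rho>) (\<lambda>w. S_fac q c w)"
proof -
  assume c: "cmod c = r"
  have h: "\<forall>w\<in>ball 0 \<rho>. c - q * w - (1-q) * c * w \<noteq> 0"
    using c by (intro ballI den_ball) auto
  show ?thesis unfolding S_fac_def
    by (intro continuous_intros) (use h in blast)
qed

lemma cont_dS_ball: "cmod c = r \<Longrightarrow> continuous_on (ball 0 \<rho>) (\<lambda>w. dS q c w)"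
proof -
  assume c: "cmod c = r"
  have h: "\<forall>w\<in>ball 0 \<rho>. (c - q * w - (1-q) * c * w)^2 \<noteq> 0"
    using c den_ball by auto
  show ?thesis unfolding dS_def
    by (intro continuous_intros) (use h in blast)
qed

lemma S_fac_0: "c \<noteq> 0 \<Longrightarrow> S_fac q c 0 = q"
  by (simp add: S_fac_def)

lemma inner_eval:
  assumes z: "z \<in> torus r m"
  shows "integral {0..2*pi} (\<lambda>s. (\<i> * of_real r * exp (\<i> * of_real s)) *
      (Bf q (Suc m) \<tau> (z(Suc m := of_real r * exp (\<i> * of_real s))) *
       (\<Prod>i=1..Suc m. inverse ((z(Suc m := of_real r * exp (\<i> * of_real s))) i))))
    = (2 * of_real pi * \<i> * q ^ card {a \<in> {1..m}. \<tau> (Suc m) < \<tau> a}) * (Bf q m \<tau> z * (\<Prod>i=1..m. inverse (z i)))"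
proof -
  define P where "P = (\<Prod>i=1..m. inverse (z i))"
  define I where "I = invs (Suc m) \<tau>"
  define f where "f p w = (if snd p = Suc m then S_fac q (z (fst p)) w else S_fac q (z (fst p)) (z (snd p)))" for p :: "nat \<times> nat" and w
  define f' where "f' p w = (if snd p = Suc m then dS q (z (fst p)) w else 0)" for p :: "nat \<times> nat" and w
  define \<Phi> where "\<Phi> w = (\<Prod>p\<in>I. f p w) * P" for w
  have zn: "a \<in> {1..m} \<Longrightarrow> cmod (z a) = r" for a using torus_norm[OF z] .
  have fstI: "p \<in> I \<Longrightarrow> fst p \<in> {1..m}" for p by (auto simp: I_def invs_def)
  have Bf_eq: "Bf q (Suc m) \<tau> (z(Suc m := w)) = (\<Prod>p\<in>I. f p w)" for w
    unfolding Bf_def I_def by (rule prod.cong) (auto simp: f_def invs_def)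
  have prod_eq: "(\<Prod>i=1..Suc m. inverse ((z(Suc m := w)) i)) = P * inverse w" for w
  proof -
    have "(\<Prod>i=1..m. inverse ((z(Suc m := w)) i)) = P"
      unfolding P_def by (rule prod.cong) auto
    then show ?thesis by simp
  qed
  have deriv: "(\<Phi> has_field_derivative ((\<Sum>p\<in>I. f' p w * (\<Prod>y\<in>I-{p}. f y w)) * P)) (at w)"
    if w: "w \<in> ball 0 \<rho>" for w
    unfolding \<Phi>_def
  proof (rule DERIV_cmult_right, rule has_field_derivative_prod)
    fix p assume p: "p \<in> I"
    show "(f p has_field_derivative f' p w) (at w)"
    proof (cases "snd p = Suc m")
      case True
      then have "f p = (\<lambda>w. S_fac q (z (fst p)) w)" by (auto simp: f_def fun_eq_iff)
      moreover have "((\<lambda>w. S_fac q (z (fst p)) w) has_field_derivative dS q (z (fst p)) w) (at w)"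
        by (rule S_fac_deriv, rule den_ball) (use zn fstI p w in auto)
      ultimately show ?thesis by (simp add: f'_def True)
    next
      case False
      then have "f p = (\<lambda>w. S_fac q (z (fst p)) (z (snd p)))" by (auto simp: f_def fun_eq_iff)
      then show ?thesis by (simp add: f'_def False)
    qed
  qed
  have cf: "continuous_on (ball 0 \<rho>) (f p)" if "p \<in> I" for p
  proof (cases "snd p = Suc m")
    case True
    then have "f p = (\<lambda>w. S_fac q (z (fst p)) w)" by (auto simp: f_def fun_eq_iff)
    then show ?thesis using cont_S_ball zn fstI that by simp
  next
    case False
    then have "f p = (\<lambda>w. S_fac q (z (fst p)) (z (snd p)))" by (auto simp: f_def fun_eq_iff)
    then show ?thesis by simp
  qed
  have cf': "continuous_on (ball 0 \<rho>) (f' p)" if "p \<in> I" for p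
  proof (cases "snd p = Suc m")
    case True
    then have "f' p = (\<lambda>w. dS q (z (fst p)) w)" by (auto simp: f'_def fun_eq_iff)
    then show ?thesis using cont_dS_ball zn fstI that by simp
  next
    case False
    then have "f' p = (\<lambda>w. 0)" by (auto simp: f'_def fun_eq_iff)
    then show ?thesis by simp
  qed
  have cont: "continuous_on (ball 0 \<rho>) (\<lambda>w. (\<Sum>p\<in>I. f' p w * (\<Prod>y\<in>I-{p}. f y w)) * P)"
    by (intro continuous_intros continuous_on_sum continuous_on_prod cf cf') auto
  have mv: "integral {0..2*pi} (\<lambda>t. \<Phi> (of_real r * exp (\<i> * of_real t))) = 2 * pi * \<Phi> 0"
    by (rule mvp[OF r0 _ deriv cont]) (use r_lt_rho in auto)
  have Phi0: "\<Phi> 0 = q ^ card {a \<in> {1..m}. \<tau> (Suc m) < \<tau> a} * (Bf q m \<tau> z * P)"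
  proof -
    define J where "J = {a \<in> {1..m}. \<tau> (Suc m) < \<tau> a}"
    have I: "I = invs m \<tau> \<union> (\<lambda>a. (a, Suc m)) ` J" "invs m \<tau> \<inter> (\<lambda>a. (a, Suc m)) ` J = {}"
      unfolding I_def J_def by (rule invs_Suc, rule invs_Suc_disj)
    have fin: "finite J" by (simp add: J_def)
    have "(\<Prod>p\<in>I. f p 0) = (\<Prod>p\<in>invs m \<tau>. f p 0) * (\<Prod>p\<in>(\<lambda>a. (a, Suc m)) ` J. f p 0)"
      unfolding I(1) by (rule prod.union_disjoint) (use I(2) fin in auto)
    also have "(\<Prod>p\<in>invs m \<tau>. f p 0) = Bf q m \<tau> z"
      unfolding Bf_def by (rule prod.cong) (auto simp: f_def invs_def)
    also have "(\<Prod>p\<in>(\<lambda>a. (a, Suc m)) ` J. f p 0) = (\<Prod>a\<in>J. f (a, Suc m) 0)"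
      by (subst prod.reindex) (auto simp: inj_on_def)
    also have "\<dots> = (\<Prod>a\<in>J. q)"
    proof (rule prod.cong)
      fix a assume "a \<in> J"
      then have "z a \<noteq> 0" using zn[of a] r0 by (auto simp: J_def)
      then show "f (a, Suc m) 0 = q" by (simp add: f_def S_fac_0)
    qed simp
    also have "\<dots> = q ^ card J" by simp
    finally show ?thesis by (simp add: \<Phi>_def J_def)
  qed
  have "integral {0..2*pi} (\<lambda>s. (\<i> * of_real r * exp (\<i> * of_real s)) *
      (Bf q (Suc m) \<tau> (z(Suc m := of_real r * exp (\<i> * of_real s))) *
       (\<Prod>i=1..Suc m. inverse ((z(Suc m := of_real r * exp (\<i> * of_real s))) i))))
     = integral {0..2*pi} (\<lambda>s. \<i> * \<Phi> (of_real r * exp (\<i> * of_real s)))"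
  proof (rule integral_cong)
    fix s :: real
    have nz: "complex_of_real r * exp (\<i> * complex_of_real s) \<noteq> 0" using r0 by simp
    show "(\<i> * of_real r * exp (\<i> * of_real s)) *
      (Bf q (Suc m) \<tau> (z(Suc m := of_real r * exp (\<i> * of_real s))) *
       (\<Prod>i=1..Suc m. inverse ((z(Suc m := of_real r * exp (\<i> * of_real s))) i)))
      = \<i> * \<Phi> (of_real r * exp (\<i> * of_real s))"
      unfolding Bf_eq prod_eq \<Phi>_def using nz by (simp add: field_simps)
  qed
  also have "\<dots> = \<i> * (2 * pi * \<Phi> 0)"
    by (simp add: integral_mult_right mv)
  finally show ?thesis by (simp add: Phi0 P_def)
qed

lemma eval:
  "multi_circle_integral r n (\<lambda>z. Bf q n \<tau> z * (\<Prod>i=1..n. inverse (z i))) =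
     (2 * of_real pi * \<i>) ^ n * q ^ card (invs n \<tau>)"
proof (induction n)
  case 0
  have "invs 0 \<tau> = {}" by (auto simp: invs_def)
  then show ?case by (simp add: Bf_def)
next
  case (Suc m)
  define g where "g s = complex_of_real r * exp (\<i> * complex_of_real s)" for s :: real
  define g' where "g' s = \<i> * complex_of_real r * exp (\<i> * complex_of_real s)" for s :: real
  define F where "F z = Bf q (Suc m) \<tau> z * (\<Prod>i=1..Suc m. inverse (z i))" for z
  define c where "c = card {a \<in> {1..m}. \<tau> (Suc m) < \<tau> a}"
  have contG: "continuous_on ({0..2*pi} \<times> torus r m) (\<lambda>(s, z). g' s * F (z(Suc m := g s)))"
  proof -
    have cF: "continuous_on (torus r (Suc m)) F" unfolding F_def by (rule cont_F)
    have "continuous_on ({0..2*pi} \<times> torus r m) (F \<circ> (\<lambda>x. (snd x)(Suc m := g (fst x))))"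
    proof (rule continuous_on_compose[OF _ continuous_on_subset[OF cF]])
      show "continuous_on ({0..2 * pi} \<times> torus r m) (\<lambda>x. (snd x)(Suc m := g (fst x)))"
        unfolding g_def by (intro continuous_intros upd_cont)
      show "(\<lambda>x. (snd x)(Suc m := g (fst x))) ` ({0..2 * pi} \<times> torus r m) \<subseteq> torus r (Suc m)"
        using torus_upd norm_gamma[OF r0] by (force simp: g_def)
    qed
    then have "continuous_on ({0..2*pi} \<times> torus r m) (\<lambda>x. g' (fst x) * F ((snd x)(Suc m := g (fst x))))"
      unfolding g'_def by (auto intro!: continuous_intros simp: o_def F_def)
    then show ?thesis by (simp add: case_prod_unfold)
  qed
  have "multi_circle_integral r (Suc m) F =
      integral {0..2*pi} (\<lambda>s. multi_circle_integral r m (\<lambda>z. F (z(Suc m := g s))) * g' s)"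
    by (simp add: circle_integral_def g_def g'_def)
  also have "\<dots> = integral {0..2*pi} (\<lambda>s. multi_circle_integral r m (\<lambda>z. g' s * F (z(Suc m := g s))))"
    by (simp add: MCI_cmult mult.commute)
  also have "\<dots> = multi_circle_integral r m (\<lambda>z. integral {0..2*pi} (\<lambda>s. g' s * F (z(Suc m := g s))))"
    by (rule MCI_swap[OF r0 contG])
  also have "\<dots> = multi_circle_integral r m (\<lambda>z. (2 * of_real pi * \<i> * q ^ c) * (Bf q m \<tau> z * (\<Prod>i=1..m. inverse (z i))))"
    by (rule MCI_cong[OF r0]) (simp only: F_def g_def g'_def c_def, erule inner_eval)
  also have "\<dots> = (2 * of_real pi * \<i> * q ^ c) * ((2 * of_real pi * \<i>) ^ m * q ^ card (invs m \<tau>))"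
    by (simp only: MCI_cmult Suc.IH)
  also have "\<dots> = (2 * of_real pi * \<i>) ^ Suc m * q ^ card (invs (Suc m) \<tau>)"
    by (simp add: card_invs_Suc c_def power_add)
  finally show ?case by (simp add: F_def)
qed

end

definition Bij :: "nat \<Rightarrow> nat set \<Rightarrow> (nat \<Rightarrow> nat) set" where
  "Bij n V = {\<tau>. bij_betw \<tau> {1..n} V \<and> (\<forall>a. a \<notin> {1..n} \<longrightarrow> \<tau> a = a)}"

lemma finite_Bij: "finite V \<Longrightarrow> finite (Bij n V)"
proof (rule inj_on_finite[of "\<lambda>\<tau>. restrict \<tau> {1..n}" _ "PiE {1..n} (\<lambda>_. V)"])
  show "inj_on (\<lambda>\<tau>. restrict \<tau> {1..n}) (Bij n V)"
    by (auto simp: inj_on_def Bij_def fun_eq_iff restrict_def) (metis)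
  show "(\<lambda>\<tau>. restrict \<tau> {1..n}) ` Bij n V \<subseteq> PiE {1..n} (\<lambda>_. V)"
    by (auto simp: Bij_def bij_betw_def)
qed (auto intro: finite_PiE)

lemma qint_sum:
  fixes V :: "nat set"
  assumes "finite V"
  shows "(\<Sum>v\<in>V. q ^ card {u \<in> V. v < u}) = qint q (card V)"
proof -
  define h where "h v = card {u \<in> V. v < u}" for v
  have inj: "inj_on h V"
  proof (rule inj_onI)
    fix v w assume v: "v \<in> V" and w: "w \<in> V" and e: "h v = h w"
    show "v = w"
    proof (rule ccontr)
      assume "v \<noteq> w"
      then consider "v < w" | "w < v" by linarith
      then show False
      proof cases
        case 1
        have "{u \<in> V. w < u} \<subset> {u \<in> V. v < u}" using 1 w by auto
        then have "h w < h v" unfolding h_def by (rule psubset_card_mono[rotated]) (use assms in auto)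
        then show False using e by simp
      next
        case 2
        have "{u \<in> V. v < u} \<subset> {u \<in> V. w < u}" using 2 v by auto
        then have "h v < h w" unfolding h_def by (rule psubset_card_mono[rotated]) (use assms in auto)
        then show False using e by simp
      qed
    qed
  qed
  have sub: "h ` V \<subseteq> {..<card V}"
  proof
    fix x assume "x \<in> h ` V"
    then obtain v where v: "v \<in> V" "x = h v" by blast
    have "{u \<in> V. v < u} \<subset> V" using v by auto
    then have "h v < card V" unfolding h_def by (rule psubset_card_mono[rotated]) (use assms in auto)
    then show "x \<in> {..<card V}" using v by simp
  qed
  have img: "h ` V = {..<card V}"
    by (rule card_subset_eq) (use sub card_image[OF inj] in auto)
  have "(\<Sum>v\<in>V. q ^ h v) = (\<Sum>j\<in>h ` V. q ^ j)"
    by (rule sum.reindex[OF inj, symmetric, unfolded o_def])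
  also have "\<dots> = qint q (card V)" by (simp add: img qint_def)
  finally show ?thesis by (simp add: h_def)
qed

lemma sum_Bij:
  "finite V \<Longrightarrow> card V = n \<Longrightarrow> (\<Sum>\<tau>\<in>Bij n V. q ^ card (invs n \<tau>)) = qfact q n"
proof (induction n arbitrary: V)
  case 0
  then have V: "V = {}" by simp
  have "Bij 0 V = {id}" by (auto simp: Bij_def V fun_eq_iff)
  moreover have "invs 0 \<tau> = {}" for \<tau> by (auto simp: invs_def)
  ultimately show ?case by (simp add: qfact_def)
next
  case (Suc m)
  have finV: "finite V" by fact
  define Sg where "Sg = Sigma V (\<lambda>v. Bij m (V - {v}))"
  have "(\<Sum>\<tau>\<in>Bij (Suc m) V. q ^ card (invs (Suc m) \<tau>)) =
      (\<Sum>x\<in>Sg. q ^ card (invs (Suc m) ((snd x)(Suc m := fst x))))"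
  proof (rule sum.reindex_bij_witness[of _ "\<lambda>x. (snd x)(Suc m := fst x)" "\<lambda>\<tau>. (\<tau> (Suc m), \<tau>(Suc m := Suc m))"])
    fix x assume x: "x \<in> Sg"
    then obtain v \<tau> where xv: "x = (v, \<tau>)" "v \<in> V" "\<tau> \<in> Bij m (V - {v})" by (auto simp: Sg_def)
    then have t: "\<tau> (Suc m) = Suc m" by (auto simp: Bij_def)
    show "(((snd x)(Suc m := fst x)) (Suc m), ((snd x)(Suc m := fst x))(Suc m := Suc m)) = x"
      using xv t by (auto simp: fun_eq_iff)
    have b0: "bij_betw \<tau> {1..m} (V - {v})" using xv by (auto simp: Bij_def)
    have "bij_betw (\<tau>(Suc m := v)) {1..m} (V - {v}) = bij_betw \<tau> {1..m} (V - {v})"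
      by (rule bij_betw_cong) auto
    then have "bij_betw (\<tau>(Suc m := v)) ({1..m} \<union> {Suc m}) ((V - {v}) \<union> {(\<tau>(Suc m := v)) (Suc m)})"
      using b0 by (intro notIn_Un_bij_betw) auto
    moreover have "{1..m} \<union> {Suc m} = {1..Suc m}" "(V - {v}) \<union> {(\<tau>(Suc m := v)) (Suc m)} = V" using xv by auto
    ultimately show "(snd x)(Suc m := fst x) \<in> Bij (Suc m) V"
      using xv by (auto simp: Bij_def)
  next
    fix \<tau> assume t: "\<tau> \<in> Bij (Suc m) V"
    show "(\<lambda>x. (snd x)(Suc m := fst x)) (\<tau> (Suc m), \<tau>(Suc m := Suc m)) = \<tau>"
      by (auto simp: fun_eq_iff)
    have b: "bij_betw \<tau> {1..Suc m} V" using t by (auto simp: Bij_def)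
    have v: "\<tau> (Suc m) \<in> V" using b by (auto simp: bij_betw_def)
    have "bij_betw \<tau> ({1..Suc m} - {Suc m}) (V - {\<tau> (Suc m)})"
      by (rule bij_betw_DiffI[OF b]) (use v in auto)
    moreover have "{1..Suc m} - {Suc m} = {1..m}" by auto
    ultimately have "bij_betw (\<tau>(Suc m := Suc m)) {1..m} (V - {\<tau> (Suc m)})"
      by (metis (no_types, lifting) atLeastAtMost_iff bij_betw_cong fun_upd_other not_less_eq_eq order_refl)
    then show "(\<tau> (Suc m), \<tau>(Suc m := Suc m)) \<in> Sg"
      using v t by (auto simp: Sg_def Bij_def)  qed simp
  also have "\<dots> = (\<Sum>v\<in>V. \<Sum>\<tau>\<in>Bij m (V - {v}). q ^ card (invs (Suc m) (\<tau>(Suc m := v))))"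
    unfolding Sg_def by (subst sum.Sigma) (use finV finite_Bij in \<open>auto simp: case_prod_unfold\<close>)
  also have "\<dots> = (\<Sum>v\<in>V. q ^ card {u \<in> V. v < u} * qfact q m)"
  proof (rule sum.cong[OF refl])
    fix v assume v: "v \<in> V"
    have "(\<Sum>\<tau>\<in>Bij m (V - {v}). q ^ card (invs (Suc m) (\<tau>(Suc m := v)))) =
        (\<Sum>\<tau>\<in>Bij m (V - {v}). q ^ card {u \<in> V. v < u} * q ^ card (invs m \<tau>))"
    proof (rule sum.cong[OF refl])
      fix \<tau> assume t: "\<tau> \<in> Bij m (V - {v})"
      have i: "invs m (\<tau>(Suc m := v)) = invs m \<tau>" by (auto simp: invs_def)
      have b: "bij_betw \<tau> {1..m} (V - {v})" using t by (auto simp: Bij_def)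
      have "card {a \<in> {1..m}. (\<tau>(Suc m := v)) (Suc m) < (\<tau>(Suc m := v)) a} = card {a \<in> {1..m}. v < \<tau> a}"
        by (rule arg_cong[where f=card]) auto
      also have "\<dots> = card (\<tau> ` {a \<in> {1..m}. v < \<tau> a})"
        by (rule card_image[symmetric], rule inj_on_subset[OF bij_betw_imp_inj_on[OF b]]) auto
      also have "\<tau> ` {a \<in> {1..m}. v < \<tau> a} = {u \<in> \<tau> ` {1..m}. v < u}"
        by auto
      also have "\<dots> = {u \<in> V. v < u}"
        using b by (auto simp: bij_betw_def)
      finally have c: "card {a \<in> {1..m}. (\<tau>(Suc m := v)) (Suc m) < (\<tau>(Suc m := v)) a} = card {u \<in> V. v < u}" .
      show "q ^ card (invs (Suc m) (\<tau>(Suc m := v))) = q ^ card {u \<in> V. v < u} * q ^ card (invs m \<tau>)"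
        by (simp only: card_invs_Suc i c power_add mult.commute)
    qed
    also have "\<dots> = q ^ card {u \<in> V. v < u} * qfact q m"
      by (simp add: sum_distrib_left[symmetric] Suc.IH finV v card_Diff_singleton Suc.prems)
    finally show "(\<Sum>\<tau>\<in>Bij m (V - {v}). q ^ card (invs (Suc m) (\<tau>(Suc m := v)))) = q ^ card {u \<in> V. v < u} * qfact q m" .
  qed
  also have "\<dots> = qint q (Suc m) * qfact q m"
    by (simp add: sum_distrib_right[symmetric] qint_sum finV Suc.prems)
  also have "\<dots> = qfact q (Suc m)" by (simp add: qfact_def)
  finally show ?case .
qed


lemma Bij_permutes: "Bij n {1..n} = {\<tau>. \<tau> permutes {1..n}}"
proof (intro set_eqI iffI)
  fix \<tau> assume "\<tau> \<in> Bij n {1..n}"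
  then show "\<tau> \<in> {\<tau>. \<tau> permutes {1..n}}"
    by (auto simp: Bij_def intro!: bij_imp_permutes)
next
  fix \<tau> assume "\<tau> \<in> {\<tau>. \<tau> permutes {1..n}}"
  then have p: "\<tau> permutes {1..n}" by simp
  show "\<tau> \<in> Bij n {1..n}"
    using permutes_imp_bij[OF p] permutes_not_in[OF p] by (auto simp: Bij_def)
qed

theorem lemma3:
  fixes n :: nat and q :: complex and r :: real
  assumes "n \<ge> 1" and "0 < norm q" and "norm q < 1"
    and "0 < r" and "r < (1 - norm q) / norm (1 - q)"
  shows "(\<Sum>\<sigma>\<in>{\<sigma>. \<sigma> permutes {1..n}}.
            (1 / (2 * of_real pi * \<i>)) ^ n *
            multi_circle_integral r n (\<lambda>z. A_sigma q n \<sigma> z * (\<Prod>i=1..n. inverse (z i))))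
         = qfact q n"
proof -
  have nz: "(2 * of_real pi * \<i> :: complex) \<noteq> 0" by simp
  have "(\<Sum>\<sigma>\<in>{\<sigma>. \<sigma> permutes {1..n}}.
            (1 / (2 * of_real pi * \<i>)) ^ n *
            multi_circle_integral r n (\<lambda>z. A_sigma q n \<sigma> z * (\<Prod>i=1..n. inverse (z i))))
      = (\<Sum>\<sigma>\<in>{\<sigma>. \<sigma> permutes {1..n}}. q ^ card (invs n (inv \<sigma>)))"
  proof (rule sum.cong[OF refl])
    fix \<sigma>
    have A: "A_sigma q n \<sigma> z = Bf q n (inv \<sigma>) z" for z
      by (simp add: A_sigma_def Bf_def inversions_def invs_def)
    have "(1 / (2 * of_real pi * \<i>)) ^ n *
            multi_circle_integral r n (\<lambda>z. A_sigma q n \<sigma> z * (\<Prod>i=1..n. inverse (z i)))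
        = (1 / (2 * of_real pi * \<i>)) ^ n * ((2 * of_real pi * \<i>) ^ n * q ^ card (invs n (inv \<sigma>)))"
      unfolding A by (subst eval[OF assms(2-5)]) (rule refl)
    also have "\<dots> = q ^ card (invs n (inv \<sigma>))"
      using nz by (simp add: power_one_over field_simps)
    finally show "(1 / (2 * of_real pi * \<i>)) ^ n *
            multi_circle_integral r n (\<lambda>z. A_sigma q n \<sigma> z * (\<Prod>i=1..n. inverse (z i)))
        = q ^ card (invs n (inv \<sigma>))" .
  qed
  also have "\<dots> = (\<Sum>\<tau>\<in>Bij n {1..n}. q ^ card (invs n \<tau>))"
  proof (rule sum.reindex_bij_witness[of _ inv inv])
    fix \<sigma> assume "\<sigma> \<in> {\<sigma>. \<sigma> permutes {1..n}}"
    then have p: "\<sigma> permutes {1..n}" by simp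
    show "inv (inv \<sigma>) = \<sigma>" by (rule permutes_inv_inv[OF p])
    show "inv \<sigma> \<in> Bij n {1..n}" unfolding Bij_permutes using permutes_inv[OF p] by simp
  next
    fix \<tau> assume "\<tau> \<in> Bij n {1..n}"
    then have p: "\<tau> permutes {1..n}" unfolding Bij_permutes by simp
    show "inv (inv \<tau>) = \<tau>" by (rule permutes_inv_inv[OF p])
    show "inv \<tau> \<in> {\<sigma>. \<sigma> permutes {1..n}}" using permutes_inv[OF p] by simp
  qed simp
  also have "\<dots> = qfact q n"
    by (rule sum_Bij) auto
  finally show ?thesis .
qed

end
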